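(* There is a constant $A=A(\mathcal I)>0$ such that for all $b_0,b\in\Theta$, $$A^2\max\Big\{K(\pi_{b_0},\pi_b),\ E_{b_0}\Big[\Big(\log\frac{\pi_{b_0}(X_0)}{\pi_b(X_0)}\Big)^2\Big]\Big\}\le\|b_0-b\|_2^2.$$
   Context: Known $\sigma\in C^2_{per}([0,1])$ (1-periodic $C^2$) with $0<\sigma_L\le\sigma\le\sigma_U$; known $K_0$, $\Theta=\{f\in C^1_{per}([0,1]):\|f\|_\infty+\|f'\|_\infty\le K_0\}$; $\mathcal I=\{K_0,\sigma_L,\sigma_U\}$. For $b\in\Theta$, with $I_b(x)=\int_0^x2b(y)/\sigma^2(y)dy$, $\pi_b(x)=\frac{e^{I_b(x)}}{H_b\sigma^2(x)}\big(e^{I_b(1)}\int_x^1e^{-I_b(y)}dy+\int_0^xe^{-I_b(y)}dy\big)$, $x\in[0,1]$, with $H_b$ chosen so that $\int_0^1\pi_b=1$ (the invariant density of $X\bmod1$ for the solution $X$ of $dX_t=b(X_t)dt+\sigma(X_t)dW_t$). Under $E_{b_0}$, $X_0$ has density $\pi_{b_0}$. $K(p,q)=\int\log(p/q)\,p$ is the Kullback–Leibler divergence. *)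

theory Defs
  imports "HOL-Analysis.Analysis"
begin

text \<open>1-periodic functions on the real line (identified with functions on [0,1]).\<close>
definition periodic1 :: "(real \<Rightarrow> real) \<Rightarrow> bool" where
  "periodic1 f \<longleftrightarrow> (\<forall>x. f (x + 1) = f x)"

definition C1_fun :: "(real \<Rightarrow> real) \<Rightarrow> bool" where
  "C1_fun f \<longleftrightarrow> (\<forall>x. (f has_real_derivative deriv f x) (at x)) \<and> continuous_on UNIV (deriv f)"

definition C1_per :: "(real \<Rightarrow> real) \<Rightarrow> bool" where
  "C1_per f \<longleftrightarrow> periodic1 f \<and> C1_fun f"

definition C2_per :: "(real \<Rightarrow> real) \<Rightarrow> bool" where
  "C2_per f \<longleftrightarrow> periodic1 f \<and> C1_fun f \<and> C1_fun (deriv f)"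

definition sup_norm :: "(real \<Rightarrow> real) \<Rightarrow> real" where
  "sup_norm f = (SUP x\<in>{0..1}. \<bar>f x\<bar>)"

definition Theta :: "real \<Rightarrow> (real \<Rightarrow> real) set" where
  "Theta K0 = {f. C1_per f \<and> sup_norm f + sup_norm (deriv f) \<le> K0}"

definition I_b :: "(real \<Rightarrow> real) \<Rightarrow> (real \<Rightarrow> real) \<Rightarrow> real \<Rightarrow> real" where
  "I_b \<sigma> b x = integral {0..x} (\<lambda>y. 2 * b y / (\<sigma> y)\<^sup>2)"

text \<open>Unnormalised invariant density.\<close>
definition pi_un :: "(real \<Rightarrow> real) \<Rightarrow> (real \<Rightarrow> real) \<Rightarrow> real \<Rightarrow> real" where
  "pi_un \<sigma> b x = exp (I_b \<sigma> b x) / (\<sigma> x)\<^sup>2 *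
     (exp (I_b \<sigma> b 1) * integral {x..1} (\<lambda>y. exp (- I_b \<sigma> b y))
      + integral {0..x} (\<lambda>y. exp (- I_b \<sigma> b y)))"

definition H_b :: "(real \<Rightarrow> real) \<Rightarrow> (real \<Rightarrow> real) \<Rightarrow> real" where
  "H_b \<sigma> b = integral {0..1} (pi_un \<sigma> b)"

text \<open>Invariant density of X mod 1 on [0,1].\<close>
definition pi_b :: "(real \<Rightarrow> real) \<Rightarrow> (real \<Rightarrow> real) \<Rightarrow> real \<Rightarrow> real" where
  "pi_b \<sigma> b x = pi_un \<sigma> b x / H_b \<sigma> b"

definition KL :: "(real \<Rightarrow> real) \<Rightarrow> (real \<Rightarrow> real) \<Rightarrow> real" where
  "KL p q = integral {0..1} (\<lambda>x. ln (p x / q x) * p x)"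

text \<open>E_{b0}[(log (pi_{b0}(X_0)/pi_b(X_0)))^2] where X_0 has density pi_{b0}.\<close>
definition KL2 :: "(real \<Rightarrow> real) \<Rightarrow> (real \<Rightarrow> real) \<Rightarrow> real" where
  "KL2 p q = integral {0..1} (\<lambda>x. (ln (p x / q x))\<^sup>2 * p x)"

definition L2sq :: "(real \<Rightarrow> real) \<Rightarrow> real" where
  "L2sq f = integral {0..1} (\<lambda>x. (f x)\<^sup>2)"

end

theory Submission
  imports Defs
begin


lemma int_pos:
  fixes f :: "real \<Rightarrow> real"
  assumes "continuous_on {a..b} f" "a < b" "\<And>x. x \<in> {a..b} \<Longrightarrow> 0 < f x"
  shows "0 < integral {a..b} f"
proof -
  obtain x0 where x0: "x0 \<in> {a..b}" "\<And>y. y \<in> {a..b} \<Longrightarrow> f x0 \<le> f y"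
    using continuous_attains_inf[of "{a..b}" f] assms by auto
  have "integral {a..b} (\<lambda>x. f x0) \<le> integral {a..b} f"
    by (rule integral_le) (use assms x0 integrable_continuous_real in auto)
  moreover have "integral {a..b} (\<lambda>x. f x0) = (b - a) * f x0" using assms by simp
  moreover have "0 < (b - a) * f x0" using assms x0 by simp
  ultimately show ?thesis by linarith
qed

definition ok :: "real \<Rightarrow> (real \<Rightarrow> real) \<Rightarrow> (real \<Rightarrow> real) \<Rightarrow> bool" where
  "ok sL s b \<longleftrightarrow> continuous_on UNIV s \<and> continuous_on UNIV b \<and> 0 < sL \<and> (\<forall>x. sL \<le> s x)"

lemma ok_g: "ok sL s b \<Longrightarrow> continuous_on UNIV (\<lambda>y. 2 * b y / (s y)\<^sup>2)"
  unfolding ok_def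
  by (intro continuous_intros) (auto, metis less_le_trans not_less order_refl)

lemma ok_I: "ok sL s b \<Longrightarrow> continuous_on {0..1} (I_b s b)"
proof -
  assume o: "ok sL s b"
  have "(\<lambda>y. 2 * b y / (s y)\<^sup>2) integrable_on {0..1}"
    using ok_g[OF o] by (intro integrable_continuous_real) (auto intro: continuous_on_subset)
  from indefinite_integral_continuous_1[OF this] show ?thesis
    unfolding I_b_def[abs_def] by simp
qed

lemma ok_e: "ok sL s b \<Longrightarrow> continuous_on {0..1} (\<lambda>y. exp (- I_b s b y))"
  using ok_I by (intro continuous_intros) auto

lemma ok_J: "ok sL s b \<Longrightarrow> continuous_on {0..1} (\<lambda>x. integral {0..x} (\<lambda>y. exp (- I_b s b y)))"
  using ok_e integrable_continuous_real indefinite_integral_continuous_1 by blast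

lemma ok_split: assumes "ok sL s b" "x \<in> {0..1}"
  shows "integral {x..1} (\<lambda>y. exp (- I_b s b y)) = integral {0..1} (\<lambda>y. exp (- I_b s b y)) - integral {0..x} (\<lambda>y. exp (- I_b s b y))"
  using Henstock_Kurzweil_Integration.integral_combine[where a=0 and c=x and b=1 and f="\<lambda>y. exp (- I_b s b y)"] assms integrable_continuous_real[OF ok_e[OF assms(1)]]
  by auto

lemma ok_pi_eq: assumes "ok sL s b" "x \<in> {0..1}"
  shows "pi_un s b x = exp (I_b s b x) / (s x)\<^sup>2 * (exp (I_b s b 1) * (integral {0..1} (\<lambda>y. exp (- I_b s b y)) - integral {0..x} (\<lambda>y. exp (- I_b s b y))) + integral {0..x} (\<lambda>y. exp (- I_b s b y)))"
  unfolding pi_un_def using ok_split[OF assms] by simp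

lemma ok_pi_cont: assumes "ok sL s b" shows "continuous_on {0..1} (pi_un s b)"
proof -
  have s0: "\<And>x. s x \<noteq> 0" using assms unfolding ok_def by (metis less_le_trans less_irrefl)
  have cs: "continuous_on {0..1} s" using assms unfolding ok_def by (auto intro: continuous_on_subset)
  have "continuous_on {0..1} (\<lambda>x. exp (I_b s b x) / (s x)\<^sup>2 * (exp (I_b s b 1) * (integral {0..1} (\<lambda>y. exp (- I_b s b y)) - integral {0..x} (\<lambda>y. exp (- I_b s b y))) + integral {0..x} (\<lambda>y. exp (- I_b s b y))))"
    using ok_I[OF assms] ok_J[OF assms] cs s0 by (intro continuous_intros) auto
  then show ?thesis by (rule continuous_on_eq) (use ok_pi_eq[OF assms] in auto)
qed

lemma ok_pi_pos: assumes "ok sL s b" "x \<in> {0..1}" shows "0 < pi_un s b x"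
proof -
  let ?e = "\<lambda>y. exp (- I_b s b y)"
  have s0: "s x \<noteq> 0" using assms unfolding ok_def by (metis less_le_trans less_irrefl)
  have ie: "?e integrable_on {0..1}" using ok_e[OF assms(1)] integrable_continuous_real by blast
  have T: "0 < integral {0..1} ?e" using ok_e[OF assms(1)] by (intro int_pos) auto
  have A: "0 \<le> integral {x..1} ?e"
    by (rule integral_nonneg) (use integrable_subinterval_real[OF ie] assms in auto)
  have B: "0 \<le> integral {0..x} ?e"
    by (rule integral_nonneg) (use integrable_subinterval_real[OF ie] assms in auto)
  define c where "c = min (exp (I_b s b 1)) 1"
  have c: "0 < c" "c \<le> exp (I_b s b 1)" "c \<le> 1" unfolding c_def by auto
  have AB: "integral {x..1} ?e + integral {0..x} ?e = integral {0..1} ?e"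
    using ok_split[OF assms] by simp
  have "c * integral {0..1} ?e \<le> exp (I_b s b 1) * integral {x..1} ?e + integral {0..x} ?e"
  proof -
    have "c * integral {0..1} ?e = c * integral {x..1} ?e + c * integral {0..x} ?e"
      by (subst AB[symmetric]) (simp add: distrib_left)
    also have "\<dots> \<le> exp (I_b s b 1) * integral {x..1} ?e + 1 * integral {0..x} ?e"
      using mult_right_mono[OF c(2) A] mult_right_mono[OF c(3) B] by linarith
    finally show ?thesis by simp
  qed
  moreover have "0 < c * integral {0..1} ?e" using c T by simp
  ultimately have "0 < exp (I_b s b 1) * integral {x..1} ?e + integral {0..x} ?e" by linarith
  then show ?thesis unfolding pi_un_def using s0 by simp
qed



lemma I_diff: assumes o0: "ok sL s b0" and o: "ok sL s b" and x: "x \<in> {0..1}"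
  shows "\<bar>I_b s b0 x - I_b s b x\<bar> \<le> 2 / sL\<^sup>2 * integral {0..1} (\<lambda>y. \<bar>b0 y - b y\<bar>)"
proof -
  let ?gz = "\<lambda>y. 2 * b0 y / (s y)\<^sup>2"
  let ?g = "\<lambda>y. 2 * b y / (s y)\<^sup>2"
  let ?h = "\<lambda>y. 2 / sL\<^sup>2 * \<bar>b0 y - b y\<bar>"
  have sub: "{0..x} \<subseteq> {0..1}" using x by auto
  have i0: "?gz integrable_on {0..x}" using ok_g[OF o0]
    by (intro integrable_continuous_real) (auto intro: continuous_on_subset)
  have i1: "?g integrable_on {0..x}" using ok_g[OF o]
    by (intro integrable_continuous_real) (auto intro: continuous_on_subset)
  have ch: "continuous_on {0..1} ?h" using o0 o unfolding ok_def
    by (intro continuous_intros) (auto intro: continuous_on_subset)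
  have ih: "?h integrable_on {0..1}" using integrable_continuous_real[OF ch] .
  have ihx: "?h integrable_on {0..x}" using integrable_subinterval_real[OF ih sub] .
  have "I_b s b0 x - I_b s b x = integral {0..x} (\<lambda>y. ?gz y - ?g y)"
    unfolding I_b_def using integral_diff[OF i0 i1] by simp
  also have "\<bar>\<dots>\<bar> \<le> integral {0..x} ?h"
  proof (rule integral_norm_bound_integral[where f="\<lambda>y. ?gz y - ?g y", simplified])
    show "(\<lambda>y. ?gz y - ?g y) integrable_on {0..x}" using integrable_diff[OF i0 i1] .
    show "?h integrable_on {0..x}" using ihx .
    fix y
    have sp: "0 < sL" "sL \<le> s y" using o unfolding ok_def by auto
    have "sL\<^sup>2 \<le> (s y)\<^sup>2" using sp by (intro power_mono) auto
    moreover have "0 < sL\<^sup>2" using sp by simp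
    moreover have "0 < (s y)\<^sup>2 * sL\<^sup>2" using sp by simp
    ultimately have "2 * \<bar>b0 y - b y\<bar> / (s y)\<^sup>2 \<le> 2 * \<bar>b0 y - b y\<bar> / sL\<^sup>2"
      by (intro divide_left_mono) auto
    moreover have "\<bar>?gz y - ?g y\<bar> = 2 * \<bar>b0 y - b y\<bar> / (s y)\<^sup>2"
    proof -
      have "?gz y - ?g y = 2 * (b0 y - b y) / (s y)\<^sup>2" by (simp add: diff_divide_distrib right_diff_distrib)
      then show ?thesis by (simp only: abs_divide abs_mult) simp
    qed
    ultimately show "\<bar>?gz y - ?g y\<bar> \<le> ?h y" by simp
  qed
  also have "\<dots> \<le> integral {0..1} ?h"
  proof -
    have "integral {0..x} ?h + integral {x..1} ?h = integral {0..1} ?h"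
      using Henstock_Kurzweil_Integration.integral_combine[OF _ _ ih] x by auto
    moreover have "0 \<le> integral {x..1} ?h"
      by (rule integral_nonneg) (use integrable_subinterval_real[OF ih] x in auto)
    ultimately show ?thesis by linarith
  qed
  also have "\<dots> = 2 / sL\<^sup>2 * integral {0..1} (\<lambda>y. \<bar>b0 y - b y\<bar>)" by simp
  finally show ?thesis .
qed

lemma compare: assumes o0: "ok sL s b0" and o: "ok sL s b"
  and D: "\<And>x. x \<in> {0..1} \<Longrightarrow> \<bar>I_b s b0 x - I_b s b x\<bar> \<le> D" and x: "x \<in> {0..1}"
  shows "pi_un s b0 x \<le> exp (3 * D) * pi_un s b x"
proof -
  define E where "E = exp D"
  have D0: "0 \<le> D" using D[of 0] by auto
  have E1: "1 \<le> E" unfolding E_def using D0 by simp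
  let ?ez = "\<lambda>y. exp (- I_b s b0 y)"
  let ?e = "\<lambda>y. exp (- I_b s b y)"
  have ee: "?ez y \<le> E * ?e y" if "y \<in> {0..1}" for y
  proof -
    have "?ez y \<le> exp (- I_b s b y + D)" using D[OF that] by simp
    then show ?thesis unfolding E_def by (metis exp_add mult.commute)
  qed
  have EE: "exp (I_b s b0 y) \<le> E * exp (I_b s b y)" if "y \<in> {0..1}" for y
  proof -
    have "exp (I_b s b0 y) \<le> exp (I_b s b y + D)" using D[OF that] by simp
    then show ?thesis unfolding E_def by (metis exp_add mult.commute)
  qed
  have ie0: "?ez integrable_on {0..1}" using integrable_continuous_real[OF ok_e[OF o0]] .
  have ie: "?e integrable_on {0..1}" using integrable_continuous_real[OF ok_e[OF o]] .
  have s1: "{x..1} \<subseteq> {0..1}" "{0..x} \<subseteq> {0..1}" using x by auto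
  have A0: "integral {x..1} ?ez \<le> E * integral {x..1} ?e"
  proof -
    have "integral {x..1} ?ez \<le> integral {x..1} (\<lambda>y. E * ?e y)"
    proof (rule integral_le)
      show "?ez integrable_on {x..1}" using integrable_subinterval_real[OF ie0 s1(1)] .
      show "(\<lambda>y. E * ?e y) integrable_on {x..1}" using integrable_on_mult_right[OF integrable_subinterval_real[OF ie s1(1)]] .
      fix y assume "y \<in> {x..1}" then have "y \<in> {0..1}" using s1 by blast
      then show "?ez y \<le> E * ?e y" by (rule ee)
    qed
    then show ?thesis by simp
  qed
  have B0: "integral {0..x} ?ez \<le> E * integral {0..x} ?e"
  proof -
    have "integral {0..x} ?ez \<le> integral {0..x} (\<lambda>y. E * ?e y)"
    proof (rule integral_le)
      show "?ez integrable_on {0..x}" using integrable_subinterval_real[OF ie0 s1(2)] .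
      show "(\<lambda>y. E * ?e y) integrable_on {0..x}" using integrable_on_mult_right[OF integrable_subinterval_real[OF ie s1(2)]] .
      fix y assume "y \<in> {0..x}" then have "y \<in> {0..1}" using s1 by blast
      then show "?ez y \<le> E * ?e y" by (rule ee)
    qed
    then show ?thesis by simp
  qed
  have A0p: "0 \<le> integral {x..1} ?ez"
    by (rule integral_nonneg) (use integrable_subinterval_real[OF ie0 s1(1)] in auto)
  have Ap: "0 \<le> integral {x..1} ?e"
    by (rule integral_nonneg) (use integrable_subinterval_real[OF ie s1(1)] in auto)
  have Bp: "0 \<le> integral {0..x} ?e"
    by (rule integral_nonneg) (use integrable_subinterval_real[OF ie s1(2)] in auto)
  define Br0 where "Br0 = exp (I_b s b0 1) * integral {x..1} ?ez + integral {0..x} ?ez"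
  define Br where "Br = exp (I_b s b 1) * integral {x..1} ?e + integral {0..x} ?e"
  have B0p: "0 \<le> integral {0..x} ?ez"
    by (rule integral_nonneg) (use integrable_subinterval_real[OF ie0 s1(2)] in auto)
  have Br0p: "0 \<le> Br0" unfolding Br0_def using A0p B0p by simp
  have Brp: "0 \<le> Br" unfolding Br_def using Ap Bp by simp
  have "Br0 \<le> (E * exp (I_b s b 1)) * (E * integral {x..1} ?e) + E * integral {0..x} ?e"
    unfolding Br0_def
    apply (intro add_mono mult_mono)
    using EE[of 1] A0 B0 A0p E1 by auto
  also have "\<dots> \<le> E^2 * Br"
  proof -
    have "E * integral {0..x} ?e \<le> E * E * integral {0..x} ?e"
      using E1 Bp by (simp add: mult_right_mono)
    then show ?thesis unfolding Br_def power2_eq_square by (simp add: algebra_simps)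
  qed
  finally have Brle: "Br0 \<le> E^2 * Br" .
  have "pi_un s b0 x = exp (I_b s b0 x) / (s x)\<^sup>2 * Br0" unfolding pi_un_def Br0_def by simp
  also have "\<dots> \<le> (E * exp (I_b s b x)) / (s x)\<^sup>2 * (E^2 * Br)"
    apply (intro mult_mono divide_right_mono Brle EE[OF x])
    using Brp Br0p E1 by auto
  also have "\<dots> = E^3 * pi_un s b x" unfolding pi_un_def Br_def
    by (simp add: power3_eq_cube power2_eq_square)
  also have "E^3 = exp (3 * D)" unfolding E_def by (simp add: exp_of_nat_mult[symmetric])
  finally show ?thesis .
qed



lemma C1_cont: "C1_fun f \<Longrightarrow> continuous_on UNIV f"
  unfolding C1_fun_def by (meson DERIV_isCont continuous_at_imp_continuous_on)

lemma ok_of: assumes "C2_per s" "\<forall>x. sL \<le> s x \<and> s x \<le> sU" "0 < sL" "b \<in> Theta K0"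
  shows "ok sL s b"
  using assms C1_cont unfolding ok_def C2_per_def Theta_def C1_per_def by auto

lemma cs_ineq: fixes d :: "real \<Rightarrow> real" assumes "continuous_on {0..1} d"
  shows "(integral {0..1} (\<lambda>x. \<bar>d x\<bar>))\<^sup>2 \<le> integral {0..1} (\<lambda>x. (d x)\<^sup>2)"
proof -
  define m where "m = integral {0..1} (\<lambda>x. \<bar>d x\<bar>)"
  have i1: "(\<lambda>x. \<bar>d x\<bar>) integrable_on {0..1}" using assms by (intro integrable_continuous_real continuous_intros)
  have i2: "(\<lambda>x. (d x)\<^sup>2) integrable_on {0..1}" using assms by (intro integrable_continuous_real continuous_intros)
  have i3: "(\<lambda>x. (\<bar>d x\<bar> - m)\<^sup>2) integrable_on {0..1}" using assms by (intro integrable_continuous_real continuous_intros)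
  have "0 \<le> integral {0..1} (\<lambda>x. (\<bar>d x\<bar> - m)\<^sup>2)" by (rule integral_nonneg[OF i3]) auto
  also have "integral {0..1} (\<lambda>x. (\<bar>d x\<bar> - m)\<^sup>2) = integral {0..1} (\<lambda>x. ((d x)\<^sup>2 - 2 * m * \<bar>d x\<bar>) + m\<^sup>2)"
    by (rule integral_cong) (simp add: power2_eq_square algebra_simps)
  also have "\<dots> = integral {0..1} (\<lambda>x. (d x)\<^sup>2 - 2 * m * \<bar>d x\<bar>) + m\<^sup>2"
    using integral_add[OF integrable_diff[OF i2 integrable_on_mult_right[OF i1, of "2*m"]] integrable_const_ivl[of "m\<^sup>2" 0 1]]
    by simp
  also have "integral {0..1} (\<lambda>x. (d x)\<^sup>2 - 2 * m * \<bar>d x\<bar>) = integral {0..1} (\<lambda>x. (d x)\<^sup>2) - 2 * m * m"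
    using integral_diff[OF i2 integrable_on_mult_right[OF i1, of "2*m"]] unfolding m_def by simp
  finally show ?thesis unfolding m_def[symmetric] by (simp add: power2_eq_square)
qed

lemma pq_bound: fixes p q D :: real assumes "0 < p" "0 < q" "p \<le> exp D * q" "q \<le> exp D * p"
  shows "\<bar>ln (p / q)\<bar> \<le> D"
proof -
  have "p / q \<le> exp D" using assms by (simp add: divide_le_eq mult.commute)
  then have a: "ln (p / q) \<le> D" using assms by (metis divide_pos_pos ln_exp ln_le_cancel_iff exp_gt_zero)
  have "q / p \<le> exp D" using assms by (simp add: divide_le_eq mult.commute)
  then have "ln (q / p) \<le> D" using assms by (metis divide_pos_pos ln_exp ln_le_cancel_iff exp_gt_zero)
  moreover have "ln (q / p) = - ln (p / q)" using assms by (simp add: ln_div)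
  ultimately show ?thesis using a by linarith
qed

lemma kl_pt: fixes p q :: real assumes p: "0 < p" and q: "0 < q"
  shows "ln (p / q) * p \<le> (p + q) * (ln (p / q))\<^sup>2 + p - q"
proof -
  define s where "s = ln (p / q)"
  have pq: "p = q * exp s" unfolding s_def using p q by simp
  have qp: "q = p * exp (- s)" unfolding s_def using p q by (simp add: exp_minus)
  show ?thesis
  proof (cases "0 \<le> s")
    case True
    define e where "e = exp (- s)"
    have h: "1 + s \<le> exp s" by (rule exp_ge_add_one_self)
    have e1: "e * (1 + s) \<le> 1" unfolding e_def using h by (simp add: exp_minus field_simps) 

    have "(1 - s + s\<^sup>2) * (1 + s) = 1 + s ^ 3" by (simp add: algebra_simps power2_eq_square power3_eq_cube)
    moreover have "0 \<le> s ^ 3" using True by simp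
    ultimately have "e * (1 + s) \<le> (1 - s + s\<^sup>2) * (1 + s)" using e1 by linarith
    then have "e \<le> 1 - s + s\<^sup>2" by (rule mult_right_le_imp_le) (use True in linarith)
    then have "s - 1 + e \<le> s\<^sup>2" by simp
    then have "p * (s - 1 + e) \<le> p * s\<^sup>2" using p by (simp add: mult_left_mono)
    moreover have qe: "q = p * e" using qp unfolding e_def .
    moreover have "s * p - p + q = p * (s - 1 + e)" unfolding qe by (simp add: algebra_simps)
    moreover have "0 \<le> q * s\<^sup>2" using q by simp
    ultimately show ?thesis unfolding s_def[symmetric] by (simp add: algebra_simps)
  next
    case False
    define E where "E = exp s"
    have h: "1 + s \<le> E" unfolding E_def by (rule exp_ge_add_one_self)
    have "(1 - s) * (1 + s) \<le> (1 - s) * E" using h False by (intro mult_left_mono) auto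
    then have "s * E - E + 1 \<le> s\<^sup>2" by (simp add: algebra_simps power2_eq_square)
    then have "q * (s * E - E + 1) \<le> q * s\<^sup>2" using q by (simp add: mult_left_mono)
    moreover have pe: "p = q * E" using pq unfolding E_def .
    moreover have "s * p - p + q = q * (s * E - E + 1)" unfolding pe by (simp add: algebra_simps)
    moreover have "0 \<le> p * s\<^sup>2" using p by simp
    ultimately show ?thesis unfolding s_def[symmetric] by (simp add: algebra_simps)
  qed
qed



lemma ratio: fixes u0 u H0 H k :: real
  assumes "0 < u0" "0 < u" "0 < H0" "0 < H" "0 < k" "u0 \<le> k * u" "H \<le> k * H0"
  shows "u0 / H0 \<le> k * k * (u / H)"
proof -
  have "u0 * H \<le> (k * u) * H" using assms by (intro mult_right_mono) auto
  also have "\<dots> \<le> (k * u) * (k * H0)" using assms by (intro mult_left_mono) auto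
  finally have "u0 * H \<le> k * k * u * H0" by (simp add: algebra_simps)
  then show ?thesis using assms by (simp add: divide_simps algebra_simps)
qed

lemma integ_comb: fixes p q :: "real \<Rightarrow> real"
  assumes "p integrable_on S" "q integrable_on S" "integral S p = 1" "integral S q = 1"
  shows "integral S (\<lambda>x. (p x + q x) * K + p x - q x) = 2 * K"
proof -
  have a: "(\<lambda>x. (p x + q x) * K) integrable_on S"
    using integrable_on_mult_left[OF integrable_add[OF assms(1,2)]] .
  have "integral S (\<lambda>x. (p x + q x) * K + p x - q x) = integral S (\<lambda>x. (p x + q x) * K + p x) - integral S q"
    by (rule integral_diff[OF integrable_add[OF a assms(1)] assms(2)])
  also have "integral S (\<lambda>x. (p x + q x) * K + p x) = integral S (\<lambda>x. (p x + q x) * K) + integral S p"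
    by (rule integral_add[OF a assms(1)])
  also have "integral S (\<lambda>x. (p x + q x) * K) = (integral S p + integral S q) * K"
    using integral_add[OF assms(1,2)] by simp
  finally show ?thesis using assms by simp
qed

lemma per_pair:
  fixes sL :: real
  assumes o0: "ok sL s b0" and o: "ok sL s b"
  defines "c1 \<equiv> 2 / sL\<^sup>2"
  shows "max (KL (pi_b s b0) (pi_b s b)) (KL2 (pi_b s b0) (pi_b s b))
           \<le> 72 * c1\<^sup>2 * L2sq (\<lambda>x. b0 x - b x)"
proof -
  define m where "m = integral {0..1} (\<lambda>y. \<bar>b0 y - b y\<bar>)"
  define D where "D = c1 * m"
  have m0: "0 \<le> m" unfolding m_def
    by (rule integral_nonneg) (use o0 o in \<open>auto simp: ok_def intro!: integrable_continuous_real continuous_intros intro: continuous_on_subset\<close>)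
  have Dab: "\<bar>I_b s b0 x - I_b s b x\<bar> \<le> D" if "x \<in> {0..1}" for x
    using I_diff[OF o0 o that] unfolding D_def m_def c1_def .
  have Dba: "\<bar>I_b s b x - I_b s b0 x\<bar> \<le> D" if "x \<in> {0..1}" for x
    using I_diff[OF o o0 that] unfolding D_def m_def c1_def by (simp add: abs_minus_commute)
  define k where "k = exp (3 * D)"
  have k0: "0 < k" unfolding k_def by simp
  have kk: "k * k = exp (6 * D)" unfolding k_def by (simp add: exp_add[symmetric])
  have u01: "pi_un s b0 x \<le> k * pi_un s b x" if "x \<in> {0..1}" for x
    unfolding k_def by (rule compare[OF o0 o Dab that])
  have u10: "pi_un s b x \<le> k * pi_un s b0 x" if "x \<in> {0..1}" for x
    unfolding k_def by (rule compare[OF o o0 Dba that])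
  have H0p: "0 < H_b s b0" unfolding H_b_def using ok_pi_cont[OF o0] ok_pi_pos[OF o0] by (intro int_pos) auto
  have Hp: "0 < H_b s b" unfolding H_b_def using ok_pi_cont[OF o] ok_pi_pos[OF o] by (intro int_pos) auto
  have iu0: "pi_un s b0 integrable_on {0..1}" using integrable_continuous_real[OF ok_pi_cont[OF o0]] .
  have iu: "pi_un s b integrable_on {0..1}" using integrable_continuous_real[OF ok_pi_cont[OF o]] .
  have H10: "H_b s b \<le> k * H_b s b0"
  proof -
    have "H_b s b \<le> integral {0..1} (\<lambda>x. k * pi_un s b0 x)" unfolding H_b_def
      by (rule integral_le[OF iu integrable_on_mult_right[OF iu0]]) (use u10 in auto)
    then show ?thesis unfolding H_b_def by simp
  qed
  have H01: "H_b s b0 \<le> k * H_b s b"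
  proof -
    have "H_b s b0 \<le> integral {0..1} (\<lambda>x. k * pi_un s b x)" unfolding H_b_def
      by (rule integral_le[OF iu0 integrable_on_mult_right[OF iu]]) (use u01 in auto)
    then show ?thesis unfolding H_b_def by simp
  qed
  define p where "p = (\<lambda>x. pi_un s b0 x / H_b s b0)"
  define q where "q = (\<lambda>x. pi_un s b x / H_b s b)"
  have pe: "pi_b s b0 = p" unfolding p_def by (rule ext) (simp add: pi_b_def)
  have qe: "pi_b s b = q" unfolding q_def by (rule ext) (simp add: pi_b_def)
  have pp: "0 < p x" if "x \<in> {0..1}" for x unfolding p_def using ok_pi_pos[OF o0 that] H0p by simp
  have qp: "0 < q x" if "x \<in> {0..1}" for x unfolding q_def using ok_pi_pos[OF o that] Hp by simp
  have cp: "continuous_on {0..1} p" unfolding p_def using ok_pi_cont[OF o0] H0p by (intro continuous_intros) auto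
  have cq: "continuous_on {0..1} q" unfolding q_def using ok_pi_cont[OF o] Hp by (intro continuous_intros) auto
  have ip: "p integrable_on {0..1}" using integrable_continuous_real[OF cp] .
  have iq: "q integrable_on {0..1}" using integrable_continuous_real[OF cq] .
  have intp: "integral {0..1} p = 1" unfolding p_def H_b_def[of s b0] using H0p unfolding H_b_def by simp
  have intq: "integral {0..1} q = 1" unfolding q_def H_b_def[of s b] using Hp unfolding H_b_def by simp
  have sb: "\<bar>ln (p x / q x)\<bar> \<le> 6 * D" if x: "x \<in> {0..1}" for x
  proof (rule pq_bound[OF pp[OF x] qp[OF x]])
    show "p x \<le> exp (6 * D) * q x" unfolding p_def q_def kk[symmetric]
      by (rule ratio) (use ok_pi_pos[OF o0 x] ok_pi_pos[OF o x] H0p Hp k0 u01[OF x] H10 in auto)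
    show "q x \<le> exp (6 * D) * p x" unfolding p_def q_def kk[symmetric]
      by (rule ratio) (use ok_pi_pos[OF o0 x] ok_pi_pos[OF o x] H0p Hp k0 u10[OF x] H01 in auto)
  qed
  have sb2: "(ln (p x / q x))\<^sup>2 \<le> (6 * D)\<^sup>2" if x: "x \<in> {0..1}" for x
    using sb[OF x] by (metis abs_ge_zero power2_abs power_mono)
  have cs: "continuous_on {0..1} (\<lambda>x. ln (p x / q x))"
    using cp cq pp qp by (intro continuous_intros) (auto dest: pp qp simp: less_imp_neq[symmetric])
  have "KL2 p q \<le> integral {0..1} (\<lambda>x. (6 * D)\<^sup>2 * p x)" unfolding KL2_def
  proof (rule integral_le)
    show "(\<lambda>x. (ln (p x / q x))\<^sup>2 * p x) integrable_on {0..1}"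
      by (intro integrable_continuous_real continuous_on_mult continuous_on_power cs cp)
    show "(\<lambda>x. (6 * D)\<^sup>2 * p x) integrable_on {0..1}" using integrable_on_mult_right[OF ip] .
    fix x :: real assume x: "x \<in> {0..1}"
    show "(ln (p x / q x))\<^sup>2 * p x \<le> (6 * D)\<^sup>2 * p x"
      using sb2[OF x] pp[OF x] by (intro mult_right_mono) auto
  qed
  also have "\<dots> = (6 * D)\<^sup>2" using intp by simp
  finally have K2: "KL2 p q \<le> (6 * D)\<^sup>2" .
  have "KL p q \<le> integral {0..1} (\<lambda>x. (p x + q x) * (6 * D)\<^sup>2 + p x - q x)" unfolding KL_def
  proof (rule integral_le)
    show "(\<lambda>x. ln (p x / q x) * p x) integrable_on {0..1}"
      by (intro integrable_continuous_real continuous_on_mult cs cp)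
    show "(\<lambda>x. (p x + q x) * (6 * D)\<^sup>2 + p x - q x) integrable_on {0..1}"
      using cp cq by (intro integrable_continuous_real continuous_intros)
    fix x :: real assume x: "x \<in> {0..1}"
    have "ln (p x / q x) * p x \<le> (p x + q x) * (ln (p x / q x))\<^sup>2 + p x - q x"
      by (rule kl_pt[OF pp[OF x] qp[OF x]])
    also have "\<dots> \<le> (p x + q x) * (6 * D)\<^sup>2 + p x - q x"
      using sb2[OF x] pp[OF x] qp[OF x] by (simp add: mult_left_mono)
    finally show "ln (p x / q x) * p x \<le> (p x + q x) * (6 * D)\<^sup>2 + p x - q x" .
  qed
  also have "\<dots> = 2 * (6 * D)\<^sup>2" by (rule integ_comb[OF ip iq intp intq])
  finally have K1: "KL p q \<le> 2 * (6 * D)\<^sup>2" .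
  have "2 * (6 * D)\<^sup>2 = 72 * c1\<^sup>2 * m\<^sup>2" unfolding D_def by (simp add: power2_eq_square)
  moreover have "m\<^sup>2 \<le> L2sq (\<lambda>x. b0 x - b x)" unfolding m_def L2sq_def
    by (rule cs_ineq) (use o0 o in \<open>auto simp: ok_def intro!: continuous_intros intro: continuous_on_subset\<close>)
  moreover have "0 \<le> 72 * c1\<^sup>2" by simp
  ultimately have "2 * (6 * D)\<^sup>2 \<le> 72 * c1\<^sup>2 * L2sq (\<lambda>x. b0 x - b x)"
    by (metis mult_left_mono)
  moreover have "(6 * D)\<^sup>2 \<le> 2 * (6 * D)\<^sup>2" by simp
  ultimately show ?thesis unfolding pe qe using K1 K2 by linarith
qed


theorem mainTheorem18:
  fixes K0 \<sigma>L \<sigma>U :: real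
  assumes "0 < \<sigma>L"
  shows "\<exists>A>0. \<forall>\<sigma> b0 b.
     C2_per \<sigma> \<longrightarrow> (\<forall>x. \<sigma>L \<le> \<sigma> x \<and> \<sigma> x \<le> \<sigma>U) \<longrightarrow>
     b0 \<in> Theta K0 \<longrightarrow> b \<in> Theta K0 \<longrightarrow>
     A\<^sup>2 * max (KL (pi_b \<sigma> b0) (pi_b \<sigma> b)) (KL2 (pi_b \<sigma> b0) (pi_b \<sigma> b))
       \<le> L2sq (\<lambda>x. b0 x - b x)"
proof -
  define c1 where "c1 = 2 / \<sigma>L\<^sup>2"
  have c1: "0 < c1" unfolding c1_def using assms by simp
  show ?thesis
  proof (rule exI[of _ "1 / (9 * c1)"], intro conjI allI impI)
    show "0 < 1 / (9 * c1)" using c1 by simp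
    fix \<sigma> b0 b :: "real \<Rightarrow> real"
    assume h1: "C2_per \<sigma>" and h2: "\<forall>x. \<sigma>L \<le> \<sigma> x \<and> \<sigma> x \<le> \<sigma>U"
      and h3: "b0 \<in> Theta K0" and h4: "b \<in> Theta K0"
    have o0: "ok \<sigma>L \<sigma> b0" by (rule ok_of[OF h1 h2 assms h3])
    have o: "ok \<sigma>L \<sigma> b" by (rule ok_of[OF h1 h2 assms h4])
    have M: "max (KL (pi_b \<sigma> b0) (pi_b \<sigma> b)) (KL2 (pi_b \<sigma> b0) (pi_b \<sigma> b))
           \<le> 72 * c1\<^sup>2 * L2sq (\<lambda>x. b0 x - b x)"
      using per_pair[OF o0 o] unfolding c1_def .
    have L0: "0 \<le> L2sq (\<lambda>x. b0 x - b x)" unfolding L2sq_def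
      by (rule integral_nonneg) (use o0 o in \<open>auto simp: ok_def intro!: integrable_continuous_real continuous_intros intro: continuous_on_subset\<close>)
    have "(1 / (9 * c1))\<^sup>2 * max (KL (pi_b \<sigma> b0) (pi_b \<sigma> b)) (KL2 (pi_b \<sigma> b0) (pi_b \<sigma> b))
        \<le> (1 / (9 * c1))\<^sup>2 * (72 * c1\<^sup>2 * L2sq (\<lambda>x. b0 x - b x))"
      by (rule mult_left_mono[OF M]) simp
    also have "\<dots> = 72 / 81 * L2sq (\<lambda>x. b0 x - b x)" using c1 by (simp add: power2_eq_square field_simps)
    also have "\<dots> \<le> L2sq (\<lambda>x. b0 x - b x)" using L0 by simp
    finally show "(1 / (9 * c1))\<^sup>2 * max (KL (pi_b \<sigma> b0) (pi_b \<sigma> b)) (KL2 (pi_b \<sigma> b0) (pi_b \<sigma> b))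
        \<le> L2sq (\<lambda>x. b0 x - b x)" .
  qed
qed

end
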